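(* Let $p \in (0,\frac{1}{2})$ be a constant. No (possibly randomized) sorting algorithm can achieve, on a random instance with $n$ elements, maximum dislocation $o(\log n)$ with high probability (i.e., with probability at least $1 - \frac{1}{n}$).
   Context: Setting: the elements are $S=\{1,\dots,n\}$ with the natural order. A random instance consists of an input permutation of $S$ chosen uniformly at random together with comparison outcomes: for each pair $i<j$ independently, the comparison reports the wrong order with probability exactly $p$ and the correct order otherwise; outcomes are persistent (repeated comparisons of the same pair return the same outcome). The algorithm accesses the elements only via these comparisons and outputs a permutation of $S$. For a sequence and element $x$, the dislocation of $x$ is the absolute difference between its position and its true rank; the maximum dislocation is the maximum over all elements. *)

theory Defs
  imports "HOL-Probability.Probability" "HOL-Combinatorics.Permutations" "HOL-Library.Landau_Symbols"
begin

text \<open>Elements are 0,...,n-1 (a shift of 1,...,n); the true rank of element a is a.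
  Positions are also 0,...,n-1.\<close>

text \<open>Uniformly random input permutation: position i holds element pi i.\<close>
definition input_pmf :: "nat \<Rightarrow> (nat \<Rightarrow> nat) pmf" where
  "input_pmf n = pmf_of_set {\<pi>. \<pi> permutes {..<n}}"

text \<open>Error pattern: for each pair of elements (a,b) with a < b, independently,
  err (a,b) = True (comparison reports the wrong order) with probability p.\<close>
definition error_pmf :: "real \<Rightarrow> nat \<Rightarrow> (nat \<times> nat \<Rightarrow> bool) pmf" where
  "error_pmf p n = Pi_pmf {(a, b). a < b \<and> b < n} False (\<lambda>_. bernoulli_pmf p)"

text \<open>Persistent comparison outcome between elements a and b:
  True means "a is reported smaller than b".\<close>
definition cmp :: "(nat \<times> nat \<Rightarrow> bool) \<Rightarrow> nat \<Rightarrow> nat \<Rightarrow> bool" where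
  "cmp err a b = (if a < b then \<not> err (a, b) else err (b, a))"

text \<open>What a comparison-based algorithm can observe: the outcomes of comparing
  the elements at input positions i and j (persistent, so this table is all it can learn).\<close>
definition observe :: "nat \<Rightarrow> (nat \<Rightarrow> nat) \<Rightarrow> (nat \<times> nat \<Rightarrow> bool) \<Rightarrow> nat \<Rightarrow> nat \<Rightarrow> bool" where
  "observe n \<pi> err i j = (if i < n \<and> j < n \<and> i \<noteq> j then cmp err (\<pi> i) (\<pi> j) else False)"

text \<open>A (possibly randomized) comparison-based sorting algorithm: for each n and each
  table of comparison outcomes between input positions, a distribution over output
  orders sigma, where sigma k is the input position placed at output position k.\<close>
definition valid_algorithm ::
  "(nat \<Rightarrow> (nat \<Rightarrow> nat \<Rightarrow> bool) \<Rightarrow> (nat \<Rightarrow> nat) pmf) \<Rightarrow> bool" where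
  "valid_algorithm A \<longleftrightarrow> (\<forall>n obs. set_pmf (A n obs) \<subseteq> {\<sigma>. \<sigma> permutes {..<n}})"

definition max_dislocation :: "nat \<Rightarrow> (nat \<Rightarrow> nat) \<Rightarrow> nat" where
  "max_dislocation n s = (MAX k \<in> {..<n}. nat \<bar>int k - int (s k)\<bar>)"

definition outcome_pmf ::
  "real \<Rightarrow> (nat \<Rightarrow> (nat \<Rightarrow> nat \<Rightarrow> bool) \<Rightarrow> (nat \<Rightarrow> nat) pmf) \<Rightarrow> nat \<Rightarrow> nat pmf" where
  "outcome_pmf p A n =
     do { \<pi> \<leftarrow> input_pmf n;
          err \<leftarrow> error_pmf p n;
          \<sigma> \<leftarrow> A n (observe n \<pi> err);
          return_pmf (max_dislocation n (\<pi> \<circ> \<sigma>)) }"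

end

theory Submission
  imports Defs
begin

definition Pairs :: "nat \<Rightarrow> (nat \<times> nat) set" where
  "Pairs n = {(a, b). a < b \<and> b < n}"

definition tau :: "nat \<Rightarrow> nat \<Rightarrow> nat" where
  "tau k j = (if j = 0 then k else if j \<le> k then j - 1 else j)"

definition taui :: "nat \<Rightarrow> nat \<Rightarrow> nat" where
  "taui k c = (if c = k then 0 else if c < k then c + 1 else c)"

definition flipE :: "nat \<Rightarrow> nat \<Rightarrow> (nat \<times> nat \<Rightarrow> bool) \<Rightarrow> (nat \<times> nat \<Rightarrow> bool)" where
  "flipE n k e = (\<lambda>(c, d). if c < d \<and> d < n then
      (if taui k c < taui k d then e (taui k c, taui k d) else \<not> e (taui k d, taui k c)) else False)"

lemma taui_tau[simp]: "taui k (tau k j) = j"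
  unfolding tau_def taui_def by auto

lemma tau_taui[simp]: "tau k (taui k c) = c"
  unfolding tau_def taui_def by auto

lemma tau_inj: "tau k a = tau k b \<longleftrightarrow> a = b"
  by (metis taui_tau)

lemma tau_less: "a < n \<Longrightarrow> k < n \<Longrightarrow> tau k a < n"
  unfolding tau_def by auto

lemma cmp_flip:
  assumes "a \<noteq> b" "a < n" "b < n" "k < n"
  shows "cmp (flipE n k e) (tau k a) (tau k b) = cmp e a b"
proof -
  have "tau k a \<noteq> tau k b" using assms tau_inj by metis
  moreover have "tau k a < n" "tau k b < n" using assms tau_less by auto
  ultimately show ?thesis using assms unfolding cmp_def flipE_def
    by (cases "tau k a < tau k b") auto
qed

lemma observe_flip:
  assumes "\<pi> permutes {..<n}" "k < n"
  shows "observe n (tau k \<circ> \<pi>) (flipE n k e) = observe n \<pi> e"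
proof (intro ext)
  fix i j
  show "observe n (tau k \<circ> \<pi>) (flipE n k e) i j = observe n \<pi> e i j"
  proof (cases "i < n \<and> j < n \<and> i \<noteq> j")
    case True
    then have "\<pi> i \<noteq> \<pi> j" using permutes_inj[OF assms(1)] by (meson injD)
    moreover have "\<pi> i < n" "\<pi> j < n" using True assms(1)
      by (auto dest: permutes_in_image)
    ultimately show ?thesis using True cmp_flip assms(2) unfolding observe_def by auto
  next
    case False
    then show ?thesis unfolding observe_def by auto
  qed
qed

definition hmap :: "nat \<Rightarrow> nat \<times> nat \<Rightarrow> nat \<times> nat" where
  "hmap k = (\<lambda>(a, b). (min (tau k a) (tau k b), max (tau k a) (tau k b)))"

lemma flipE_hmap:
  assumes "a < b" "b < n" "k < n"
  shows "flipE n k e (hmap k (a, b)) = (if tau k a < tau k b then e (a, b) else \<not> e (a, b))"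
proof -
  have "tau k a \<noteq> tau k b" using assms tau_inj by (metis less_irrefl)
  moreover have "tau k a < n" "tau k b < n" using assms tau_less by auto
  ultimately show ?thesis using assms unfolding flipE_def hmap_def
    by (cases "tau k a < tau k b") (auto simp: min_def max_def)
qed

lemma tau_inv_iff:
  assumes "a < b" "0 < k"
  shows "tau k b < tau k a \<longleftrightarrow> a = 0 \<and> b \<le> k"
  using assms unfolding tau_def by auto

lemma hmap_bij:
  assumes "k < n"
  shows "bij_betw (hmap k) (Pairs n) (Pairs n)"
proof -
  have sub: "hmap k ` Pairs n \<subseteq> Pairs n"
  proof
    fix z assume "z \<in> hmap k ` Pairs n"
    then obtain a b where ab: "a < b" "b < n" "z = hmap k (a, b)" unfolding Pairs_def by auto
    have "tau k a \<noteq> tau k b" using ab tau_inj by (metis less_irrefl)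
    moreover have "tau k a < n" "tau k b < n" using ab assms tau_less by auto
    ultimately show "z \<in> Pairs n" using ab unfolding Pairs_def hmap_def by (auto simp: min_def max_def)
  qed
  have inj: "inj_on (hmap k) (Pairs n)"
  proof (rule inj_on_inverseI)
    fix x assume x: "x \<in> Pairs n"
    obtain a b where x': "x = (a, b)" "a < b" using x unfolding Pairs_def by auto
    show "(\<lambda>(c, d). (min (taui k c) (taui k d), max (taui k c) (taui k d))) (hmap k x) = x"
      using x' unfolding hmap_def by (cases "tau k a < tau k b") (auto simp: min_def max_def)
  qed
  have "finite (Pairs n)"
    by (rule finite_subset[of _ "{..<n} \<times> {..<n}"]) (auto simp: Pairs_def)
  then have "hmap k ` Pairs n = Pairs n"
    using sub inj by (meson card_image card_subset_eq)
  then show ?thesis using inj unfolding bij_betw_def by auto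
qed

lemma tau_permutes: "k < n \<Longrightarrow> tau k permutes {..<n}"
  unfolding permutes_def
proof (intro conjI allI impI)
  fix x assume "k < n" "x \<notin> {..<n}"
  then show "tau k x = x" unfolding tau_def by auto
next
  fix y show "\<exists>!x. tau k x = y"
    by (rule ex1I[of _ "taui k y"]) (simp, metis taui_tau)
qed


lemma finite_Pairs: "finite (Pairs n)"
  by (rule finite_subset[of _ "{..<n} \<times> {..<n}"]) (auto simp: Pairs_def)

lemma error_pmf_Pairs: "error_pmf p n = Pi_pmf (Pairs n) False (\<lambda>_. bernoulli_pmf p)"
  unfolding error_pmf_def Pairs_def by simp

lemma pmf_bern: "0 \<le> p \<Longrightarrow> p \<le> 1 \<Longrightarrow> pmf (bernoulli_pmf p) b = (if b then p else 1 - p)"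
  by (cases b) auto

lemma pmf_err:
  assumes "0 \<le> p" "p \<le> 1"
  shows "pmf (error_pmf p n) e = (if (\<forall>z. z \<notin> Pairs n \<longrightarrow> \<not> e z)
            then \<Prod>z\<in>Pairs n. (if e z then p else 1 - p) else 0)"
  unfolding error_pmf_Pairs by (subst pmf_Pi[OF finite_Pairs]) (simp add: pmf_bern assms, blast)

lemma flipE_Errs: "z \<notin> Pairs n \<Longrightarrow> \<not> flipE n k e z"
  unfolding flipE_def Pairs_def by (cases z) auto

lemma pmf_flip_ge:
  assumes p: "0 < p" "p \<le> 1/2" and k: "0 < k" "k < n"
    and eE: "\<forall>z. z \<notin> Pairs n \<longrightarrow> \<not> e z" and eT: "\<forall>j. 1 \<le> j \<and> j \<le> k \<longrightarrow> e (0, j)"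
  shows "pmf (error_pmf p n) e \<le> pmf (error_pmf p n) (flipE n k e)"
proof -
  let ?\<beta> = "\<lambda>b. if b then p else 1 - p"
  have "pmf (error_pmf p n) (flipE n k e) = (\<Prod>z\<in>Pairs n. ?\<beta> (flipE n k e z))"
    using p flipE_Errs by (subst pmf_err) auto
  also have "\<dots> = (\<Prod>y\<in>Pairs n. ?\<beta> (flipE n k e (hmap k y)))"
    by (rule prod.reindex_bij_betw[OF hmap_bij[OF k(2)], symmetric])
  finally have 1: "pmf (error_pmf p n) (flipE n k e) = (\<Prod>y\<in>Pairs n. ?\<beta> (flipE n k e (hmap k y)))" .
  have 2: "pmf (error_pmf p n) e = (\<Prod>y\<in>Pairs n. ?\<beta> (e y))"
    using p eE by (subst pmf_err) auto
  have "(\<Prod>y\<in>Pairs n. ?\<beta> (e y)) \<le> (\<Prod>y\<in>Pairs n. ?\<beta> (flipE n k e (hmap k y)))"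
  proof (rule prod_mono)
    fix y assume y: "y \<in> Pairs n"
    then obtain a b where ab: "y = (a, b)" "a < b" "b < n" unfolding Pairs_def by auto
    show "0 \<le> ?\<beta> (e y) \<and> ?\<beta> (e y) \<le> ?\<beta> (flipE n k e (hmap k y))"
    proof (cases "tau k a < tau k b")
      case True
      then show ?thesis using ab p k flipE_hmap[OF ab(2,3) k(2)] by auto
    next
      case False
      then have "tau k b < tau k a" using ab tau_inj by (metis less_irrefl nat_neq_iff)
      then have "a = 0 \<and> b \<le> k" using tau_inv_iff[OF ab(2) k(1)] by simp
      then have "e y" using eT ab by auto
      then show ?thesis using False ab p k flipE_hmap[OF ab(2,3) k(2)] by auto
    qed
  qed
  then show ?thesis using 1 2 by simp
qed

lemma flip_inj:
  assumes k: "k < n" and e1: "\<forall>z. z \<notin> Pairs n \<longrightarrow> \<not> e1 z" and e2: "\<forall>z. z \<notin> Pairs n \<longrightarrow> \<not> e2 z"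
    and eq: "flipE n k e1 = flipE n k e2"
  shows "e1 = e2"
proof
  fix z show "e1 z = e2 z"
  proof (cases "z \<in> Pairs n")
    case True
    then obtain a b where ab: "z = (a, b)" "a < b" "b < n" unfolding Pairs_def by auto
    show ?thesis using flipE_hmap[OF ab(2,3) k, of e1] flipE_hmap[OF ab(2,3) k, of e2] eq ab
      by (auto split: if_splits)
  next
    case False
    then show ?thesis using e1[rule_format, OF False] e2[rule_format, OF False] by simp
  qed
qed

lemma disl_alt:
  assumes \<sigma>: "\<sigma> permutes {..<n}" and \<pi>: "\<pi> permutes {..<n}" and k: "k < n" and t: "real k > 2 * t"
  shows "\<not> real (max_dislocation n (\<pi> \<circ> \<sigma>)) \<le> t \<or> \<not> real (max_dislocation n ((tau k \<circ> \<pi>) \<circ> \<sigma>)) \<le> t"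
proof -
  have \<rho>: "(\<pi> \<circ> \<sigma>) permutes {..<n}" using permutes_compose[OF \<sigma> \<pi>] .
  have "0 \<in> (\<pi> \<circ> \<sigma>) ` {..<n}" using permutes_image[OF \<rho>] k by auto
  then obtain m where m: "m < n" "\<pi> (\<sigma> m) = 0" by auto
  have "nat \<bar>int m - int ((\<pi> \<circ> \<sigma>) m)\<bar> \<le> max_dislocation n (\<pi> \<circ> \<sigma>)"
    unfolding max_dislocation_def by (rule Max_ge) (use m in \<open>auto intro!: image_eqI[where x=m]\<close>)
  then have d1: "m \<le> max_dislocation n (\<pi> \<circ> \<sigma>)" using m by simp
  have "nat \<bar>int m - int (((tau k \<circ> \<pi>) \<circ> \<sigma>) m)\<bar> \<le> max_dislocation n ((tau k \<circ> \<pi>) \<circ> \<sigma>)"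
    unfolding max_dislocation_def by (rule Max_ge) (use m in \<open>auto intro!: image_eqI[where x=m]\<close>)
  then have d2: "nat \<bar>int m - int k\<bar> \<le> max_dislocation n ((tau k \<circ> \<pi>) \<circ> \<sigma>)"
    using m by (simp add: tau_def)
  have "real k \<le> real m + real (nat \<bar>int m - int k\<bar>)" by (cases "m \<le> k") auto
  then show ?thesis using d1 d2 t
    by (smt (verit, best) of_nat_le_iff)
qed


lemma prob_bind_pmf: "measure_pmf.prob (bind_pmf M f) X = (\<integral>x. measure_pmf.prob (f x) X \<partial>measure_pmf M)"
  unfolding measure_pmf_bind
  by (rule subprob_space.measure_bind[OF subprob_space_measure_pmf])
     (auto simp: space_subprob_algebra measure_pmf_in_subprob_space subprob_space_measure_pmf)

lemma G_sum:
  assumes A: "valid_algorithm A" and \<pi>: "\<pi> permutes {..<n}" and k: "k < n" and t: "real k > 2 * t"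
  shows "measure_pmf.prob (A n obs) {\<sigma>. \<not> real (max_dislocation n (\<pi> \<circ> \<sigma>)) \<le> t}
       + measure_pmf.prob (A n obs) {\<sigma>. \<not> real (max_dislocation n ((tau k \<circ> \<pi>) \<circ> \<sigma>)) \<le> t} \<ge> 1"
proof -
  let ?M = "A n obs"
  define X1 where "X1 = {\<sigma>. \<not> real (max_dislocation n (\<pi> \<circ> \<sigma>)) \<le> t}"
  define X2 where "X2 = {\<sigma>. \<not> real (max_dislocation n ((tau k \<circ> \<pi>) \<circ> \<sigma>)) \<le> t}"
  have "set_pmf ?M \<subseteq> X1 \<union> X2"
  proof
    fix \<sigma> assume "\<sigma> \<in> set_pmf ?M"
    then have "\<sigma> permutes {..<n}" using A unfolding valid_algorithm_def by blast
    then show "\<sigma> \<in> X1 \<union> X2" using disl_alt[OF _ \<pi> k t] unfolding X1_def X2_def by blast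
  qed
  then have "measure_pmf.prob ?M (UNIV - (X1 \<union> X2)) = 0"
    by (subst measure_pmf_zero_iff) blast
  then have "measure_pmf.prob ?M (X1 \<union> X2) = 1"
    using measure_pmf.prob_compl[of "X1 \<union> X2" ?M] by simp
  moreover have "measure_pmf.prob ?M (X1 \<union> X2) \<le> measure_pmf.prob ?M X1 + measure_pmf.prob ?M X2"
    by (rule measure_Un_le) auto
  ultimately show ?thesis unfolding X1_def X2_def by simp
qed


lemma lower_bound:
  assumes p: "0 < p" "p \<le> 1/2" and A: "valid_algorithm A"
    and k: "0 < k" "k < n" and t: "real k > 2 * t"
  shows "measure_pmf.prob (outcome_pmf p A n) {d. \<not> real d \<le> t} \<ge> p ^ k"
proof -
  define Perms where "Perms = {\<pi>. \<pi> permutes {..<n}}"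
  define Errs where "Errs = {e. \<forall>z. z \<notin> Pairs n \<longrightarrow> \<not> e z}"
  define Inv where "Inv = (\<lambda>j. (0::nat, j)) ` {1..k}"
  define Ek where "Ek = PiE_dflt (Pairs n) False (\<lambda>z. if z \<in> Inv then {True} else UNIV)"
  define M where "M = pair_pmf (input_pmf n) (error_pmf p n)"
  define G where "G = (\<lambda>(\<pi>, e). measure_pmf.prob (A n (observe n \<pi> e))
                          {\<sigma>. \<not> real (max_dislocation n (\<pi> \<circ> \<sigma>)) \<le> t})"
  define \<Phi> where "\<Phi> = (\<lambda>(\<pi>::nat\<Rightarrow>nat, e). (tau k \<circ> \<pi>, flipE n k e))"
  define S1 where "S1 = Perms \<times> Ek"
  define U where "U = Perms \<times> Errs"
  have finP: "finite Perms" unfolding Perms_def by (rule finite_permutations) auto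
  have neP: "Perms \<noteq> {}" unfolding Perms_def using permutes_id by blast
  have finE: "finite Errs"
  proof (rule finite_subset)
    show "Errs \<subseteq> (\<lambda>S z. z \<in> S) ` Pow (Pairs n)"
    proof
      fix e assume "e \<in> Errs"
      then have ee: "\<forall>z. z \<notin> Pairs n \<longrightarrow> \<not> e z" unfolding Errs_def by blast
      have "e = (\<lambda>z. z \<in> {z \<in> Pairs n. e z})"
      proof (rule ext)
        fix z show "e z = (z \<in> {z \<in> Pairs n. e z})" using ee by blast
      qed
      moreover have "{z \<in> Pairs n. e z} \<in> Pow (Pairs n)" by auto
      ultimately show "e \<in> (\<lambda>S z. z \<in> S) ` Pow (Pairs n)" by blast
    qed
  qed (use finite_Pairs in auto)
  have finU: "finite U" unfolding U_def using finP finE by auto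
  have InvP: "Inv \<subseteq> Pairs n" unfolding Inv_def Pairs_def using k by auto
  have EkE: "Ek \<subseteq> Errs" unfolding Ek_def Errs_def PiE_dflt_def by auto
  have EkT: "e (0, j)" if "e \<in> Ek" "1 \<le> j" "j \<le> k" for e j
  proof -
    have i: "(0, j) \<in> Inv" unfolding Inv_def using that by auto
    then have "(0, j) \<in> Pairs n" using InvP by auto
    then have "e (0, j) \<in> (if (0, j) \<in> Inv then {True} else UNIV)"
      using that(1) unfolding Ek_def PiE_dflt_def by blast
    then show ?thesis using i by simp
  qed
  have finS1: "finite S1" unfolding S1_def using finP finE EkE finite_subset by blast
  have S1U: "S1 \<subseteq> U" unfolding S1_def U_def using EkE by auto
  have pmf_in: "pmf (input_pmf n) \<pi> = 1 / real (card Perms)" if "\<pi> \<in> Perms" for \<pi>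
    using that finP neP unfolding input_pmf_def Perms_def[symmetric] by simp
  have outc: "outcome_pmf p A n = bind_pmf M (\<lambda>(\<pi>, e). map_pmf (\<lambda>\<sigma>. max_dislocation n (\<pi> \<circ> \<sigma>)) (A n (observe n \<pi> e)))"
    unfolding outcome_pmf_def M_def pair_pmf_def by (simp add: bind_assoc_pmf bind_return_pmf map_pmf_def)
  have step2: "measure_pmf.prob (outcome_pmf p A n) {d. \<not> real d \<le> t} = (\<integral>z. G z \<partial>measure_pmf M)"
    unfolding outc prob_bind_pmf G_def by (intro Bochner_Integration.integral_cong) (auto simp: vimage_def)
  have setM: "set_pmf M \<subseteq> U"
  proof
    fix z assume "z \<in> set_pmf M"
    then obtain \<pi> e where z: "z = (\<pi>, e)" "\<pi> \<in> set_pmf (input_pmf n)" "e \<in> set_pmf (error_pmf p n)"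
      unfolding M_def set_pair_pmf by auto
    have "\<pi> \<in> Perms" using z(2) finP neP unfolding input_pmf_def Perms_def[symmetric] by simp
    moreover have "e \<in> Errs"
    proof (rule ccontr)
      assume "e \<notin> Errs"
      then have "pmf (error_pmf p n) e = 0" using p unfolding Errs_def by (subst pmf_err) auto
      then show False using z(3) by (simp add: set_pmf_iff)
    qed
    ultimately show "z \<in> U" unfolding U_def using z by auto
  qed
  have step3: "(\<integral>z. G z \<partial>measure_pmf M) = (\<Sum>z\<in>U. G z * pmf M z)"
    by (rule integral_measure_pmf_real[OF finU]) (use setM in auto)
  have Gnn: "0 \<le> G z" for z unfolding G_def by (cases z) auto
  have PhiU: "\<Phi> z \<in> U" if zS: "z \<in> S1" for z
  proof -
    obtain \<pi> e where z: "z = (\<pi>, e)" "\<pi> \<in> Perms" "e \<in> Ek" using zS unfolding S1_def by auto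
    have "tau k \<circ> \<pi> \<in> Perms" using z(2) permutes_compose tau_permutes[OF k(2)] unfolding Perms_def by blast
    moreover have "flipE n k e \<in> Errs" unfolding Errs_def using flipE_Errs by blast
    ultimately show ?thesis unfolding \<Phi>_def U_def z by simp
  qed
  have PhiS1: "\<Phi> z \<notin> S1" if zS: "z \<in> S1" for z
  proof -
    obtain \<pi> e where z: "z = (\<pi>, e)" "\<pi> \<in> Perms" "e \<in> Ek" using zS unfolding S1_def by auto
    have "e (0, 1)" using EkT[OF z(3)] k by auto
    then have "\<not> flipE n k e (0, k)" using k unfolding flipE_def taui_def by auto
    then have "flipE n k e \<notin> Ek" using EkT[of "flipE n k e" k] k by auto
    then show ?thesis unfolding \<Phi>_def z S1_def by auto
  qed
  have injPhi: "inj_on \<Phi> S1"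
  proof (rule inj_onI)
    fix z1 z2 assume z1: "z1 \<in> S1" and z2: "z2 \<in> S1" and eq: "\<Phi> z1 = \<Phi> z2"
    obtain \<pi>1 e1 where a: "z1 = (\<pi>1, e1)" "e1 \<in> Errs" using z1 EkE unfolding S1_def by auto
    obtain \<pi>2 e2 where b: "z2 = (\<pi>2, e2)" "e2 \<in> Errs" using z2 EkE unfolding S1_def by auto
    have "tau k \<circ> \<pi>1 = tau k \<circ> \<pi>2" "flipE n k e1 = flipE n k e2" using eq a b unfolding \<Phi>_def by auto
    then have "\<pi>1 = \<pi>2" "e1 = e2"
      using flip_inj[OF k(2)] a b tau_inj unfolding Errs_def by (auto simp: fun_eq_iff)
    then show "z1 = z2" using a b by simp
  qed
  have pair_ge: "G z * pmf M z + G (\<Phi> z) * pmf M (\<Phi> z) \<ge> pmf M z" if zS: "z \<in> S1" for z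
  proof -
    obtain \<pi> e where z: "z = (\<pi>, e)" "\<pi> \<in> Perms" "e \<in> Ek" using zS unfolding S1_def by auto
    have tp: "tau k \<circ> \<pi> \<in> Perms" using z(2) permutes_compose tau_permutes[OF k(2)] unfolding Perms_def by blast
    have pe: "pmf (error_pmf p n) e \<le> pmf (error_pmf p n) (flipE n k e)"
      using pmf_flip_ge[OF p k] EkE z(3) EkT[OF z(3)] unfolding Errs_def by blast
    have pm: "pmf M z \<le> pmf M (\<Phi> z)"
      unfolding M_def z \<Phi>_def using pmf_in[OF z(2)] pmf_in[OF tp] pe
      by (auto simp: pmf_pair intro!: divide_right_mono)
    have obs: "observe n (tau k \<circ> \<pi>) (flipE n k e) = observe n \<pi> e"
      using observe_flip z(2) k unfolding Perms_def by blast
    have gs: "G z + G (\<Phi> z) \<ge> 1"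
      using G_sum[OF A _ k(2) t, of \<pi> "observe n \<pi> e"] z(2) obs unfolding G_def \<Phi>_def z Perms_def by simp
    have "pmf M z \<le> (G z + G (\<Phi> z)) * pmf M z"
      using gs by (simp add: mult_le_cancel_right1 pmf_nonneg)
    also have "\<dots> \<le> G z * pmf M z + G (\<Phi> z) * pmf M (\<Phi> z)"
      using pm Gnn[of "\<Phi> z"] by (simp add: distrib_right mult_left_mono)
    finally show ?thesis .
  qed
  have "(\<Sum>z\<in>S1. pmf M z) \<le> (\<Sum>z\<in>S1. G z * pmf M z + G (\<Phi> z) * pmf M (\<Phi> z))"
    by (rule sum_mono) (rule pair_ge)
  also have "\<dots> = (\<Sum>z\<in>S1. G z * pmf M z) + (\<Sum>z\<in>\<Phi> ` S1. G z * pmf M z)"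
    by (simp add: sum.distrib sum.reindex[OF injPhi])
  also have "\<dots> = (\<Sum>z\<in>S1 \<union> \<Phi> ` S1. G z * pmf M z)"
    by (rule sum.union_disjoint[symmetric]) (use finS1 PhiS1 in auto)
  also have "\<dots> \<le> (\<Sum>z\<in>U. G z * pmf M z)"
    by (rule sum_mono2[OF finU]) (use S1U PhiU Gnn in \<open>auto intro: mult_nonneg_nonneg\<close>)
  finally have main: "(\<Sum>z\<in>S1. pmf M z) \<le> (\<Sum>z\<in>U. G z * pmf M z)" .
  have "(\<Sum>z\<in>S1. pmf M z) = measure_pmf.prob M S1"
    by (rule measure_measure_pmf_finite[symmetric, OF finS1])
  also have "\<dots> = measure_pmf.prob (input_pmf n) Perms * measure_pmf.prob (error_pmf p n) Ek"
    unfolding M_def S1_def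
    by (rule measure_pmf_prob_product) (use finP finE EkE countable_finite finite_subset in blast)+
  also have "measure_pmf.prob (input_pmf n) Perms = 1"
    unfolding input_pmf_def Perms_def[symmetric] using finP neP by (simp add: measure_pmf_of_set)
  also have "measure_pmf.prob (error_pmf p n) Ek = (\<Prod>z\<in>Pairs n. if z \<in> Inv then p else 1)"
    unfolding error_pmf_Pairs Ek_def
    by (subst measure_Pi_pmf_PiE_dflt[OF finite_Pairs]) (use p in \<open>auto intro!: prod.cong simp: measure_pmf_single\<close>)
  also have "\<dots> = p ^ k"
  proof -
    have "(\<Prod>z\<in>Pairs n. if z \<in> Inv then p else 1) = (\<Prod>z\<in>Inv. p)"
      by (rule prod.mono_neutral_cong_right[OF finite_Pairs InvP]) auto
    also have "\<dots> = p ^ card Inv" by simp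
    also have "card Inv = k" unfolding Inv_def by (subst card_image) (auto simp: inj_on_def)
    finally show ?thesis .
  qed
  finally show ?thesis using main step2 step3 by simp
qed


lemma asymp_part:
  fixes f :: "nat \<Rightarrow> real"
  assumes p: "0 < p" "p < 1/2" and f: "f \<in> o(\<lambda>n. ln (real n))"
  shows "\<forall>\<^sub>F n in at_top. 0 < nat \<lfloor>2 * f n\<rfloor> + 1 \<and> nat \<lfloor>2 * f n\<rfloor> + 1 < n
             \<and> real (nat \<lfloor>2 * f n\<rfloor> + 1) > 2 * f n \<and> p ^ (nat \<lfloor>2 * f n\<rfloor> + 1) > 1 / real n"
proof -
  define L where "L = - ln p"
  have L: "0 < L" unfolding L_def using p by simp
  define c where "c = min (1/4) (1 / (4 * L))"
  have c: "0 < c" "c \<le> 1/4" "2 * c * L \<le> 1/2" unfolding c_def using L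
    by (auto simp: min_def field_simps)
  have ev1: "\<forall>\<^sub>F n in at_top. norm (f n) \<le> c * norm (ln (real n))"
    by (rule landau_o.smallD[OF f c(1)])
  have ev2: "\<forall>\<^sub>F n in at_top. n > max 2 (nat \<lceil>exp (2 * L)\<rceil>)"
    by (rule eventually_gt_at_top)
  show ?thesis using ev1 ev2
  proof eventually_elim
    case (elim n)
    define k where "k = nat \<lfloor>2 * f n\<rfloor> + 1"
    have e2: "n > 2" "n > nat \<lceil>exp (2 * L)\<rceil>" using elim(2) by auto
    have n2: "real n \<ge> 2" using e2 by simp
    have lnn: "0 \<le> ln (real n)" using n2 by simp
    have fa: "\<bar>f n\<bar> \<le> c * ln (real n)" using elim(1) lnn by (simp only: real_norm_def abs_of_nonneg)
    define r where "r = 2 * f n"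
    have fl1: "real (nat \<lfloor>r\<rfloor>) \<le> max 0 r"
    proof (cases "0 \<le> \<lfloor>r\<rfloor>")
      case True
      then have "real (nat \<lfloor>r\<rfloor>) = real_of_int \<lfloor>r\<rfloor>" by simp
      also have "\<dots> \<le> r" by (rule of_int_floor_le)
      finally show ?thesis by simp
    next
      case False
      then show ?thesis by simp
    qed
    have fl2: "real_of_int \<lfloor>r\<rfloor> \<le> real (nat \<lfloor>r\<rfloor>)" by simp
    have fl3: "r < real_of_int \<lfloor>r\<rfloor> + 1" by (rule real_of_int_floor_add_one_gt)
    have kdef: "real k = real (nat \<lfloor>r\<rfloor>) + 1" unfolding k_def r_def by simp
    have "max 0 r \<le> 2 * \<bar>f n\<bar>" unfolding r_def by simp
    then have kr: "real k \<le> 2 * c * ln (real n) + 1" using fl1 kdef fa by linarith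
    have kgt: "real k > 2 * f n" using fl2 fl3 kdef unfolding r_def by linarith
    have "ln (real n) \<le> real n - 1" using n2 by (intro ln_le_minus_one) auto
    moreover have "(2 * c) * ln (real n) \<le> (1/2) * ln (real n)"
      using c lnn by (intro mult_right_mono) auto
    ultimately have "real k < real n" using kr n2 by linarith
    then have kn: "k < n" by simp
    have "exp (2 * L) \<le> real (nat \<lceil>exp (2 * L)\<rceil>)" by (rule real_nat_ceiling_ge)
    moreover have "real (nat \<lceil>exp (2 * L)\<rceil>) < real n" using e2 by linarith
    ultimately have nbig: "real n > exp (2 * L)" by linarith
    then have "ln (exp (2 * L)) < ln (real n)"
      using n2 by (subst ln_less_cancel_iff) auto
    then have lnbig: "ln (real n) > 2 * L" by simp
    have lnp: "ln p < 0" using p by simp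
    have "real k * ln p \<ge> (2 * c * ln (real n) + 1) * ln p"
      using mult_right_mono_neg[OF kr] lnp by simp
    moreover have "(2 * c * ln (real n)) * ln p \<ge> - (1/2) * ln (real n)"
    proof -
      have "(2 * c * ln (real n)) * ln p = - ((2 * c * L) * ln (real n))" unfolding L_def by simp
      moreover have "(2 * c * L) * ln (real n) \<le> (1/2) * ln (real n)"
        using c lnn by (intro mult_right_mono) auto
      ultimately show ?thesis by linarith
    qed
    moreover have "(2 * c * ln (real n) + 1) * ln p = (2 * c * ln (real n)) * ln p + ln p"
      by (simp add: distrib_right)
    ultimately have pos: "real k * ln p + ln (real n) > 0"
      using lnbig unfolding L_def by linarith
    have "1 < exp (real k * ln p + ln (real n))" using pos by (rule one_less_exp_iff[THEN iffD2])
    moreover have "exp (real k * ln p + ln (real n)) = p ^ k * real n"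
    proof -
      have "exp (real k * ln p + ln (real n)) = exp (ln p) ^ k * exp (ln (real n))"
        by (simp only: exp_add exp_of_nat_mult)
      also have "\<dots> = p ^ k * real n" using p n2 by simp
      finally show ?thesis .
    qed
    ultimately have "p ^ k * real n > 1" by simp
    then have "p ^ k > 1 / real n" using n2 by (simp add: field_simps)
    then show ?case using kn kgt unfolding k_def by simp
  qed
qed


theorem theorem6p2:
  fixes p :: real
    and A :: "nat \<Rightarrow> (nat \<Rightarrow> nat \<Rightarrow> bool) \<Rightarrow> (nat \<Rightarrow> nat) pmf"
    and f :: "nat \<Rightarrow> real"
  assumes "0 < p" and "p < 1/2"
    and "valid_algorithm A"
    and "f \<in> o(\<lambda>n. ln (real n))"
  shows "\<not> (\<forall>\<^sub>F n in at_top.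
            measure_pmf.prob (outcome_pmf p A n) {d. real d \<le> f n} \<ge> 1 - 1 / real n)"
proof
  assume H: "\<forall>\<^sub>F n in at_top.
            measure_pmf.prob (outcome_pmf p A n) {d. real d \<le> f n} \<ge> 1 - 1 / real n"
  have "\<forall>\<^sub>F (n::nat) in at_top. False" using H asymp_part[OF assms(1,2,4)]
  proof eventually_elim
    case (elim n)
    define k where "k = nat \<lfloor>2 * f n\<rfloor> + 1"
    have k: "0 < k" "k < n" "real k > 2 * f n" "p ^ k > 1 / real n" using elim(2) unfolding k_def by auto
    have lb: "p ^ k \<le> measure_pmf.prob (outcome_pmf p A n) {d. \<not> real d \<le> f n}"
      by (rule lower_bound[OF assms(1) _ assms(3) k(1,2,3)]) (use assms(2) in simp)
    have "measure_pmf.prob (outcome_pmf p A n) (UNIV - {d. real d \<le> f n})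
          = 1 - measure_pmf.prob (outcome_pmf p A n) {d. real d \<le> f n}"
      using measure_pmf.prob_compl[of "{d. real d \<le> f n}" "outcome_pmf p A n"] by simp
    moreover have "UNIV - {d. real d \<le> f n} = {d. \<not> real d \<le> f n}" by auto
    ultimately have "measure_pmf.prob (outcome_pmf p A n) {d. \<not> real d \<le> f n}
          = 1 - measure_pmf.prob (outcome_pmf p A n) {d. real d \<le> f n}" by simp
    then show False using lb k(4) elim(1) by linarith
  qed
  then show False by simp
qed

end
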